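(* Let $K$ be a simplicial complex and let $\overrightarrow{W}$ be a Morse sequence on $K$. Then there exists exactly one reference map for $\overrightarrow{W}$ and exactly one coreference map for $\overrightarrow{W}$.
   Context: A simplicial complex $K$ is a finite collection of non-empty finite sets such that every non-empty subset of a member of $K$ is also in $K$; its members are called simplices (or faces), $\dim\sigma=|\sigma|-1$, $K^{(p)}$ denotes the set of $p$-dimensional simplices, and a facet is a simplex maximal for inclusion. A pair $(\sigma,\tau)$ of simplices of $K$ with $\sigma\subsetneq\tau$ is a free pair for $K$ if $\tau$ is the only simplex of $K$ other than $\sigma$ that contains $\sigma$ (so $\tau$ is a facet and $\dim\tau=\dim\sigma+1$); then $K$ is an elementary expansion of $K\setminus\{\sigma,\tau\}$. If $\nu$ is a facet of $K$, then $K$ is an elementary filling of $K\setminus\{\nu\}$. A Morse sequence on $K$ is a sequence $\overrightarrow{W}=\langle \emptyset=K_0,K_1,\dots,K_k=K\rangle$ of simplicial complexes such that each $K_i$ is an elementary expansion or an elementary filling of $K_{i-1}$. If $K_i=K_{i-1}\cup\{\nu\}$ is a filling, $\nu$ is called critical; if $K_i=K_{i-1}\cup\{\sigma,\tau\}$ is an expansion with $\sigma\subset\tau$, then $(\sigma,\tau)$ is a regular pair, $\sigma$ is lower regular and $\tau$ is upper regular. Let $\widehat{W}$ be the set of critical simplices. Chains mod 2: $K[p]$ is the set of all subsets of $K^{(p)}$, a vector space over $\mathbb{Z}_2$ with symmetric difference as addition, the empty chain written $0$; $\widehat{W}[p]=\{c\in K[p]: c\subseteq \widehat W\}$. For $\sigma\in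 K^{(p)}$, $\partial(\sigma)=\{\tau\in K^{(p-1)}:\tau\subset\sigma\}$ and $\delta(\sigma)=\{\tau\in K^{(p+1)}:\sigma\subset\tau\}$. A frame on $\overrightarrow{W}$ is a map $\Upsilon$ assigning to each $\nu\in K^{(p)}$ an element $\Upsilon(\nu)\in\widehat W[p]$; it is extended linearly to chains by $\Upsilon(c)=\sum_{\nu\in c}\Upsilon(\nu)$ (sum mod 2). A frame $\curlywedge$ is a reference map for $\overrightarrow{W}$ if $\curlywedge(\nu)=\{\nu\}$ for every critical $\nu$ and, for every upper regular $\tau$, $\curlywedge(\tau)=0$ and $\curlywedge(\partial(\tau))=0$. A frame $\curlyvee$ is a coreference map for $\overrightarrow{W}$ if $\curlyvee(\nu)=\{\nu\}$ for every critical $\nu$ and, for every lower regular $\sigma$, $\curlyvee(\sigma)=0$ and $\curlyvee(\delta(\sigma))=0$. *)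

theory Defs
  imports Main
begin

definition simplicial_complex :: "'a set set \<Rightarrow> bool" where
  "simplicial_complex K \<longleftrightarrow> finite K \<and> (\<forall>\<sigma>\<in>K. finite \<sigma> \<and> \<sigma> \<noteq> {}) \<and>
     (\<forall>\<sigma>\<in>K. \<forall>\<tau>. \<tau> \<noteq> {} \<and> \<tau> \<subseteq> \<sigma> \<longrightarrow> \<tau> \<in> K)"

definition dim :: "'a set \<Rightarrow> nat" where "dim \<sigma> = card \<sigma> - 1"

definition psimplices :: "'a set set \<Rightarrow> nat \<Rightarrow> 'a set set" where
  "psimplices K p = {\<sigma>\<in>K. card \<sigma> = p + 1}"

definition free_pair :: "'a set set \<Rightarrow> 'a set \<Rightarrow> 'a set \<Rightarrow> bool" where
  "free_pair K \<sigma> \<tau> \<longleftrightarrow> \<sigma> \<in> K \<and> \<tau> \<in> K \<and> \<sigma> \<subset> \<tau> \<and> (\<forall>\<mu>\<in>K. \<sigma> \<subseteq> \<mu> \<longrightarrow> \<mu> = \<sigma> \<or> \<mu> = \<tau>)"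

definition facet :: "'a set set \<Rightarrow> 'a set \<Rightarrow> bool" where
  "facet K \<nu> \<longleftrightarrow> \<nu> \<in> K \<and> (\<forall>\<mu>\<in>K. \<nu> \<subseteq> \<mu> \<longrightarrow> \<mu> = \<nu>)"

definition expansion_step :: "'a set set \<Rightarrow> 'a set set \<Rightarrow> 'a set \<Rightarrow> 'a set \<Rightarrow> bool" where
  "expansion_step L L' \<sigma> \<tau> \<longleftrightarrow> free_pair L' \<sigma> \<tau> \<and> L = L' - {\<sigma>, \<tau>}"

definition filling_step :: "'a set set \<Rightarrow> 'a set set \<Rightarrow> 'a set \<Rightarrow> bool" where
  "filling_step L L' \<nu> \<longleftrightarrow> facet L' \<nu> \<and> L = L' - {\<nu>}"

definition morse_sequence :: "'a set set \<Rightarrow> 'a set set list \<Rightarrow> bool" where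
  "morse_sequence K W \<longleftrightarrow> W \<noteq> [] \<and> W ! 0 = {} \<and> last W = K \<and>
     (\<forall>i<length W. simplicial_complex (W ! i)) \<and>
     (\<forall>i. 0 < i \<and> i < length W \<longrightarrow>
        (\<exists>\<sigma> \<tau>. expansion_step (W ! (i - 1)) (W ! i) \<sigma> \<tau>) \<or>
        (\<exists>\<nu>. filling_step (W ! (i - 1)) (W ! i) \<nu>))"

definition critical :: "'a set set list \<Rightarrow> 'a set \<Rightarrow> bool" where
  "critical W \<nu> \<longleftrightarrow> (\<exists>i. 0 < i \<and> i < length W \<and> filling_step (W ! (i - 1)) (W ! i) \<nu>)"

definition regular_pair :: "'a set set list \<Rightarrow> 'a set \<Rightarrow> 'a set \<Rightarrow> bool" where
  "regular_pair W \<sigma> \<tau> \<longleftrightarrow> (\<exists>i. 0 < i \<and> i < length W \<and> expansion_step (W ! (i - 1)) (W ! i) \<sigma> \<tau>)"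

definition upper_regular :: "'a set set list \<Rightarrow> 'a set \<Rightarrow> bool" where
  "upper_regular W \<tau> \<longleftrightarrow> (\<exists>\<sigma>. regular_pair W \<sigma> \<tau>)"

definition lower_regular :: "'a set set list \<Rightarrow> 'a set \<Rightarrow> bool" where
  "lower_regular W \<sigma> \<longleftrightarrow> (\<exists>\<tau>. regular_pair W \<sigma> \<tau>)"

definition bd :: "'a set set \<Rightarrow> 'a set \<Rightarrow> 'a set set" where
  "bd K \<sigma> = {\<tau>\<in>K. card \<tau> + 1 = card \<sigma> \<and> \<tau> \<subset> \<sigma>}"

definition cobd :: "'a set set \<Rightarrow> 'a set \<Rightarrow> 'a set set" where
  "cobd K \<sigma> = {\<tau>\<in>K. card \<tau> = card \<sigma> + 1 \<and> \<sigma> \<subset> \<tau>}"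

text \<open>Linear extension of a map to mod-2 chains (finite sets of simplices):
  a simplex occurs in the sum iff it occurs in an odd number of the summands.\<close>
definition chain_ext :: "('a set \<Rightarrow> 'a set set) \<Rightarrow> 'a set set \<Rightarrow> 'a set set" where
  "chain_ext \<Upsilon> c = {\<mu>. odd (card {\<nu>\<in>c. \<mu> \<in> \<Upsilon> \<nu>})}"

text \<open>A frame on W (a Morse sequence on K): each p-simplex of K is sent to a p-chain of
  critical simplices. Frames are maps on K; we normalise them to be empty outside K.\<close>
definition frame :: "'a set set \<Rightarrow> 'a set set list \<Rightarrow> ('a set \<Rightarrow> 'a set set) \<Rightarrow> bool" where
  "frame K W \<Upsilon> \<longleftrightarrow>
     (\<forall>p. \<forall>\<nu>\<in>psimplices K p. \<Upsilon> \<nu> \<subseteq> {\<mu>\<in>psimplices K p. critical W \<mu>}) \<and>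
     (\<forall>\<nu>. \<nu> \<notin> K \<longrightarrow> \<Upsilon> \<nu> = {})"

definition reference_map :: "'a set set \<Rightarrow> 'a set set list \<Rightarrow> ('a set \<Rightarrow> 'a set set) \<Rightarrow> bool" where
  "reference_map K W \<Upsilon> \<longleftrightarrow> frame K W \<Upsilon> \<and>
     (\<forall>\<nu>. critical W \<nu> \<longrightarrow> \<Upsilon> \<nu> = {\<nu>}) \<and>
     (\<forall>\<tau>. upper_regular W \<tau> \<longrightarrow> \<Upsilon> \<tau> = {} \<and> chain_ext \<Upsilon> (bd K \<tau>) = {})"

definition coreference_map :: "'a set set \<Rightarrow> 'a set set list \<Rightarrow> ('a set \<Rightarrow> 'a set set) \<Rightarrow> bool" where
  "coreference_map K W \<Upsilon> \<longleftrightarrow> frame K W \<Upsilon> \<and>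
     (\<forall>\<nu>. critical W \<nu> \<longrightarrow> \<Upsilon> \<nu> = {\<nu>}) \<and>
     (\<forall>\<sigma>. lower_regular W \<sigma> \<longrightarrow> \<Upsilon> \<sigma> = {} \<and> chain_ext \<Upsilon> (cobd K \<sigma>) = {})"

end

theory Submission
  imports Defs
begin

lemma sc_face: "simplicial_complex L \<Longrightarrow> \<sigma> \<in> L \<Longrightarrow> \<tau> \<noteq> {} \<Longrightarrow> \<tau> \<subseteq> \<sigma> \<Longrightarrow> \<tau> \<in> L"
  unfolding simplicial_complex_def by blast

lemma sc_fin: "simplicial_complex L \<Longrightarrow> \<sigma> \<in> L \<Longrightarrow> finite \<sigma> \<and> \<sigma> \<noteq> {}"
  unfolding simplicial_complex_def by blast

lemma sc_finK: "simplicial_complex L \<Longrightarrow> finite L"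
  unfolding simplicial_complex_def by blast

lemma ms_basic:
  assumes "morse_sequence K W"
  shows "W \<noteq> []" "W ! 0 = {}" "W ! (length W - 1) = K" "0 < length W"
  using assms by (auto simp: morse_sequence_def last_conv_nth)

lemma ms_cx: "morse_sequence K W \<Longrightarrow> i < length W \<Longrightarrow> simplicial_complex (W ! i)"
  by (simp add: morse_sequence_def)

lemma ms_step: "morse_sequence K W \<Longrightarrow> 0 < i \<Longrightarrow> i < length W \<Longrightarrow>
   (\<exists>\<sigma> \<tau>. expansion_step (W ! (i - 1)) (W ! i) \<sigma> \<tau>) \<or> (\<exists>\<nu>. filling_step (W ! (i - 1)) (W ! i) \<nu>)"
  by (simp add: morse_sequence_def)

lemma exp_facts:
  assumes "expansion_step L L' \<sigma> \<tau>"
  shows "\<sigma> \<in> L'" "\<tau> \<in> L'" "\<sigma> \<notin> L" "\<tau> \<notin> L" "\<sigma> \<subset> \<tau>" "L' = insert \<sigma> (insert \<tau> L)" "L \<subseteq> L'"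
    "free_pair L' \<sigma> \<tau>" "x \<in> L' \<longleftrightarrow> x = \<sigma> \<or> x = \<tau> \<or> x \<in> L"
  using assms by (auto simp: expansion_step_def free_pair_def)

lemma fill_facts:
  assumes "filling_step L L' \<nu>"
  shows "\<nu> \<in> L'" "\<nu> \<notin> L" "L' = insert \<nu> L" "L \<subseteq> L'" "x \<in> L' \<longleftrightarrow> x = \<nu> \<or> x \<in> L"
  using assms by (auto simp: filling_step_def facet_def)

lemma ms_sub: "morse_sequence K W \<Longrightarrow> 0 < i \<Longrightarrow> i < length W \<Longrightarrow> W ! (i - 1) \<subseteq> W ! i"
  using ms_step exp_facts(7) fill_facts(4) by metis

lemma ms_mono: assumes "morse_sequence K W" "i \<le> j" "j < length W" shows "W ! i \<subseteq> W ! j"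
  using assms(2,3)
proof (induction j)
  case 0 then show ?case by simp
next
  case (Suc j)
  show ?case
  proof (cases "i = Suc j")
    case True then show ?thesis by simp
  next
    case False
    then have "W ! i \<subseteq> W ! j" using Suc by simp
    moreover have "W ! j \<subseteq> W ! Suc j" using ms_sub[OF assms(1), of "Suc j"] Suc.prems by simp
    ultimately show ?thesis by blast
  qed
qed

lemma ms_inK: "morse_sequence K W \<Longrightarrow> i < length W \<Longrightarrow> W ! i \<subseteq> K"
  using ms_mono[of K W i "length W - 1"] ms_basic[of K W] by simp

lemma ms_scK: "morse_sequence K W \<Longrightarrow> simplicial_complex K"
  using ms_cx[of K W "length W - 1"] ms_basic[of K W] by simp

lemma ms_faces:
  assumes "morse_sequence K W" "i < length W" "\<tau> \<in> W ! i" "\<mu> \<in> K" "\<mu> \<subseteq> \<tau>"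
  shows "\<mu> \<in> W ! i"
  using sc_face[OF ms_cx[OF assms(1,2)] assms(3) _ assms(5)] sc_fin[OF ms_scK[OF assms(1)] assms(4)] by blast

lemma ms_unique_step:
  assumes "morse_sequence K W" "0 < i" "i < length W" "0 < j" "j < length W"
    "x \<in> W ! i" "x \<notin> W ! (i - 1)" "x \<in> W ! j" "x \<notin> W ! (j - 1)"
  shows "i = j"
proof (rule ccontr)
  assume "i \<noteq> j"
  then consider "i < j" | "j < i" by linarith
  then show False
  proof cases
    case 1
    then have "W ! i \<subseteq> W ! (j - 1)" using ms_mono[OF assms(1), of i "j - 1"] assms by simp
    then show False using assms by blast
  next
    case 2
    then have "W ! j \<subseteq> W ! (i - 1)" using ms_mono[OF assms(1), of j "i - 1"] assms by simp
    then show False using assms by blast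
  qed
qed

lemma crit_not_reg:
  assumes ms: "morse_sequence K W" and "critical W \<nu>" "regular_pair W \<sigma> \<tau>" "\<nu> = \<sigma> \<or> \<nu> = \<tau>"
  shows False
proof -
  obtain i where i: "0 < i" "i < length W" "filling_step (W ! (i - 1)) (W ! i) \<nu>"
    using assms(2) critical_def by blast
  obtain j where j: "0 < j" "j < length W" "expansion_step (W ! (j - 1)) (W ! j) \<sigma> \<tau>"
    using assms(3) regular_pair_def by blast
  note F = fill_facts[OF i(3)] and E = exp_facts[OF j(3)]
  have "i = j" using ms_unique_step[OF ms i(1,2) j(1,2), of \<nu>] F E assms(4) by blast
  then show False using F E by auto
qed

lemma reg_conflict:
  assumes ms: "morse_sequence K W" and "regular_pair W \<sigma> \<tau>" "regular_pair W \<rho> \<sigma>"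
  shows False
proof -
  obtain i where i: "0 < i" "i < length W" "expansion_step (W ! (i - 1)) (W ! i) \<sigma> \<tau>"
    using assms(2) regular_pair_def by blast
  obtain j where j: "0 < j" "j < length W" "expansion_step (W ! (j - 1)) (W ! j) \<rho> \<sigma>"
    using assms(3) regular_pair_def by blast
  note E1 = exp_facts[OF i(3)] and E2 = exp_facts[OF j(3)]
  have "i = j" using ms_unique_step[OF ms i(1,2) j(1,2), of \<sigma>] E1 E2 by blast
  then have "\<rho> = \<sigma> \<or> \<rho> = \<tau>" using E1 E2 by auto
  then show False using E1 E2 by auto
qed

lemma chain_sub: "chain_ext f c \<subseteq> \<Union> (f ` c)"
proof
  fix \<mu> assume "\<mu> \<in> chain_ext f c"
  then have "odd (card {\<nu> \<in> c. \<mu> \<in> f \<nu>})" unfolding chain_ext_def by simp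
  then have "card {\<nu> \<in> c. \<mu> \<in> f \<nu>} \<noteq> 0" by (metis dvd_0_right)
  then have "{\<nu> \<in> c. \<mu> \<in> f \<nu>} \<noteq> {}" by (metis card.empty)
  then show "\<mu> \<in> \<Union> (f ` c)" by auto
qed

lemma chain_cong: "(\<And>x. x \<in> c \<Longrightarrow> f x = g x) \<Longrightarrow> chain_ext f c = chain_ext g c"
proof -
  assume a: "\<And>x. x \<in> c \<Longrightarrow> f x = g x"
  have "\<And>\<mu>. {\<nu>\<in>c. \<mu> \<in> f \<nu>} = {\<nu>\<in>c. \<mu> \<in> g \<nu>}" using a by auto
  then show ?thesis unfolding chain_ext_def by simp
qed

lemma chain_insert:
  assumes "finite c" "x \<notin> c"
  shows "chain_ext f (insert x c) = (f x - chain_ext f c) \<union> (chain_ext f c - f x)"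
proof -
  have *: "card {\<nu> \<in> insert x c. \<mu> \<in> f \<nu>} = card {\<nu> \<in> c. \<mu> \<in> f \<nu>} + (if \<mu> \<in> f x then 1 else 0)" for \<mu>
  proof (cases "\<mu> \<in> f x")
    case True
    then have "{\<nu> \<in> insert x c. \<mu> \<in> f \<nu>} = insert x {\<nu> \<in> c. \<mu> \<in> f \<nu>}" by auto
    then show ?thesis using True assms by simp
  next
    case False
    then have "{\<nu> \<in> insert x c. \<mu> \<in> f \<nu>} = {\<nu> \<in> c. \<mu> \<in> f \<nu>}" by auto
    then show ?thesis using False by simp
  qed
  show ?thesis
  proof (rule set_eqI)
    fix \<mu>
    show "\<mu> \<in> chain_ext f (insert x c) \<longleftrightarrow> \<mu> \<in> (f x - chain_ext f c) \<union> (chain_ext f c - f x)"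
      unfolding chain_ext_def mem_Collect_eq * by (cases "\<mu> \<in> f x") auto
  qed
qed

lemma chain_zero_insert:
  assumes "finite c" "x \<in> c" "chain_ext f c = {}"
  shows "f x = chain_ext f (c - {x})"
proof -
  have "c = insert x (c - {x})" using assms by blast
  then have "chain_ext f c = (f x - chain_ext f (c - {x})) \<union> (chain_ext f (c - {x}) - f x)"
    using chain_insert[of "c - {x}" x f] assms by simp
  then show ?thesis using assms(3) by blast
qed

lemma chain_zero_intro:
  assumes "finite c" "x \<in> c" "f x = chain_ext f (c - {x})"
  shows "chain_ext f c = {}"
proof -
  have "c = insert x (c - {x})" using assms by blast
  then have "chain_ext f c = (f x - chain_ext f (c - {x})) \<union> (chain_ext f (c - {x}) - f x)"
    using chain_insert[of "c - {x}" x f] assms by simp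
  then show ?thesis using assms(3) by blast
qed

lemma exp_geom:
  assumes ms: "morse_sequence K W" and i: "0 < i" "i < length W"
    and ex: "expansion_step (W ! (i - 1)) (W ! i) \<sigma> \<tau>"
  shows "card \<tau> = card \<sigma> + 1" "\<sigma> \<in> bd K \<tau>" "bd K \<tau> - {\<sigma>} \<subseteq> W ! (i - 1)" "finite (bd K \<tau>)"
    "\<tau> \<in> cobd K \<sigma>" "cobd K \<sigma> - {\<tau>} \<subseteq> K - W ! i" "finite (cobd K \<sigma>)" "regular_pair W \<sigma> \<tau>"
    "\<sigma> \<in> K" "\<tau> \<in> K"
proof -
  note E = exp_facts[OF ex]
  have scL': "simplicial_complex (W ! i)" using ms_cx[OF ms] i by simp
  have scK: "simplicial_complex K" using ms_scK[OF ms] .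
  have LK: "W ! i \<subseteq> K" using ms_inK[OF ms] i by simp
  have finK: "finite K" using sc_finK[OF scK] .
  show "\<sigma> \<in> K" "\<tau> \<in> K" using E(1,2) LK by auto
  have fin: "finite \<tau>" using sc_fin[OF scL' E(2)] by blast
  obtain x where x: "x \<in> \<tau>" "x \<notin> \<sigma>" using E(5) by blast
  have "insert x \<sigma> \<subseteq> \<tau>" using x E(5) by blast
  then have "insert x \<sigma> \<in> W ! i" using sc_face[OF scL' E(2), of "insert x \<sigma>"] by simp
  moreover have "\<forall>\<mu>\<in>W ! i. \<sigma> \<subseteq> \<mu> \<longrightarrow> \<mu> = \<sigma> \<or> \<mu> = \<tau>" using E(8) unfolding free_pair_def by blast
  ultimately have "insert x \<sigma> = \<sigma> \<or> insert x \<sigma> = \<tau>" by blast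
  then have "insert x \<sigma> = \<tau>" using x(2) by auto
  moreover have "finite \<sigma>" using fin E(5) finite_subset by blast
  ultimately show cst: "card \<tau> = card \<sigma> + 1" using x by auto
  show "\<sigma> \<in> bd K \<tau>" using E(1,2,5) LK cst unfolding bd_def by auto
  show "bd K \<tau> - {\<sigma>} \<subseteq> W ! (i - 1)"
  proof
    fix \<mu> assume m: "\<mu> \<in> bd K \<tau> - {\<sigma>}"
    then have "\<mu> \<in> K" "\<mu> \<subset> \<tau>" "\<mu> \<noteq> \<sigma>" unfolding bd_def by auto
    then have "\<mu> \<in> W ! i" using ms_faces[OF ms i(2) E(2)] by blast
    then show "\<mu> \<in> W ! (i - 1)" using E(6) \<open>\<mu> \<subset> \<tau>\<close> \<open>\<mu> \<noteq> \<sigma>\<close> by blast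
  qed
  show "finite (bd K \<tau>)" using finK unfolding bd_def by simp
  show "finite (cobd K \<sigma>)" using finK unfolding cobd_def by simp
  show "\<tau> \<in> cobd K \<sigma>" using E(1,2,5) LK cst unfolding cobd_def by auto
  show "cobd K \<sigma> - {\<tau>} \<subseteq> K - W ! i"
  proof
    fix \<mu> assume m: "\<mu> \<in> cobd K \<sigma> - {\<tau>}"
    then have "\<mu> \<in> K" "\<sigma> \<subset> \<mu>" "\<mu> \<noteq> \<tau>" unfolding cobd_def by auto
    moreover have "\<forall>\<mu>\<in>W ! i. \<sigma> \<subseteq> \<mu> \<longrightarrow> \<mu> = \<sigma> \<or> \<mu> = \<tau>" using E(8) unfolding free_pair_def by blast
    ultimately show "\<mu> \<in> K - W ! i" by blast
  qed
  show "regular_pair W \<sigma> \<tau>" unfolding regular_pair_def using i ex by blast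
qed

lemma crit_inK: assumes "morse_sequence K W" "critical W x" shows "x \<in> K"
proof -
  obtain i where "0 < i" "i < length W" "filling_step (W ! (i - 1)) (W ! i) x"
    using assms(2) critical_def by blast
  then show ?thesis using fill_facts(1) ms_inK[OF assms(1)] by blast
qed

lemma reg_inK: assumes "morse_sequence K W" "regular_pair W x y" shows "x \<in> K \<and> y \<in> K"
proof -
  obtain i where "0 < i" "i < length W" "expansion_step (W ! (i - 1)) (W ! i) x y"
    using assms(2) regular_pair_def by blast
  then show ?thesis using exp_facts(1,2) ms_inK[OF assms(1)] by blast
qed

lemma bd_sub: "morse_sequence K W \<Longrightarrow> i < length W \<Longrightarrow> t \<in> W ! i \<Longrightarrow> bd K t \<subseteq> W ! i"
  using ms_faces unfolding bd_def by blast

lemma cobd_sub: "morse_sequence K W \<Longrightarrow> i < length W \<Longrightarrow> s \<in> K - W ! i \<Longrightarrow> cobd K s \<subseteq> K - W ! i"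
  using ms_faces unfolding cobd_def by blast


definition ref_inv where
  "ref_inv K W n U \<longleftrightarrow> (\<forall>\<nu>. \<nu> \<notin> W ! n \<longrightarrow> U \<nu> = {}) \<and>
     (\<forall>\<nu>\<in>W ! n. U \<nu> \<subseteq> {\<mu>\<in>K. critical W \<mu> \<and> card \<mu> = card \<nu>}) \<and>
     (\<forall>\<nu>\<in>W ! n. critical W \<nu> \<longrightarrow> U \<nu> = {\<nu>}) \<and>
     (\<forall>\<tau>\<in>W ! n. upper_regular W \<tau> \<longrightarrow> U \<tau> = {} \<and> chain_ext U (bd K \<tau>) = {})"

lemma ref_exists_step:
  assumes ms: "morse_sequence K W" and i: "0 < i" "i < length W" and inv: "ref_inv K W (i - 1) U"
  shows "\<exists>U'. ref_inv K W i U'"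
proof -
  let ?L = "W ! (i - 1)" and ?L' = "W ! i"
  have LK: "?L' \<subseteq> K" using ms_inK[OF ms] i by simp
  have i1: "i - 1 < length W" using i by simp
  note inv' = inv[unfolded ref_inv_def]
  note inv1 = inv'[THEN conjunct1, rule_format]
  note inv2 = inv'[THEN conjunct2, THEN conjunct1, rule_format]
  note inv3 = inv'[THEN conjunct2, THEN conjunct2, THEN conjunct1, rule_format]
  note inv4 = inv'[THEN conjunct2, THEN conjunct2, THEN conjunct2, rule_format]
  from ms_step[OF ms i] show ?thesis
  proof
    assume "\<exists>\<sigma> \<tau>. expansion_step ?L ?L' \<sigma> \<tau>"
    then obtain \<sigma> \<tau> where ex: "expansion_step ?L ?L' \<sigma> \<tau>" by blast
    note E = exp_facts[OF ex] and G = exp_geom[OF ms i ex]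
    have st: "\<sigma> \<noteq> \<tau>" using E(5) by blast
    define U' where "U' = U(\<sigma> := chain_ext U (bd K \<tau> - {\<sigma>}), \<tau> := {})"
    have eqL: "U' x = U x" if "x \<in> ?L" for x using that E(3,4) unfolding U'_def by auto
    have h1: "U' x = {}" if "x \<notin> ?L'" for x
    proof -
      have "x \<notin> ?L" "x \<noteq> \<sigma>" "x \<noteq> \<tau>" using that E(1,2,7) by auto
      then show ?thesis using inv1 unfolding U'_def by simp
    qed
    have h2: "U' x \<subseteq> {\<mu>\<in>K. critical W \<mu> \<and> card \<mu> = card x}" if "x \<in> ?L'" for x
    proof -
      have "x = \<sigma> \<or> x = \<tau> \<or> x \<in> ?L" using E(9)[of x] that by blast
      then consider "x \<in> ?L" | "x = \<sigma>" | "x = \<tau>" by blast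
      then show ?thesis
      proof cases
        case 1 then show ?thesis using inv2 eqL by auto
      next
        case 2
        have "U' x = chain_ext U (bd K \<tau> - {\<sigma>})" using 2 st unfolding U'_def by simp
        also have "\<dots> \<subseteq> \<Union> (U ` (bd K \<tau> - {\<sigma>}))" by (rule chain_sub)
        also have "\<dots> \<subseteq> {\<mu>\<in>K. critical W \<mu> \<and> card \<mu> = card x}"
        proof
          fix \<mu> assume "\<mu> \<in> \<Union> (U ` (bd K \<tau> - {\<sigma>}))"
          then obtain \<rho> where r: "\<rho> \<in> bd K \<tau> - {\<sigma>}" "\<mu> \<in> U \<rho>" by blast
          have "card \<rho> = card x" using r(1) G(1) 2 unfolding bd_def by auto
          moreover have "\<rho> \<in> ?L" using r(1) G(3) by blast
          ultimately show "\<mu> \<in> {\<mu>\<in>K. critical W \<mu> \<and> card \<mu> = card x}" using inv2[of \<rho>] r(2) by auto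
        qed
        finally show ?thesis .
      next
        case 3 then show ?thesis unfolding U'_def by simp
      qed
    qed
    have h3: "U' x = {x}" if "x \<in> ?L'" "critical W x" for x
    proof -
      have "x \<noteq> \<sigma>" "x \<noteq> \<tau>" using crit_not_reg[OF ms that(2) G(8)] by auto
      then have "x \<in> ?L" using E(9)[of x] that(1) by blast
      then show ?thesis using inv3 eqL that(2) by auto
    qed
    have h4: "U' t = {} \<and> chain_ext U' (bd K t) = {}" if tin: "t \<in> ?L'" and treg: "upper_regular W t" for t
    proof -
      have "t = \<sigma> \<or> t = \<tau> \<or> t \<in> ?L" using E(9)[of t] tin by blast
      then consider "t \<in> ?L" | "t = \<sigma>" | "t = \<tau>" by blast
      then show ?thesis
      proof cases
        case 1
        have "chain_ext U' (bd K t) = chain_ext U (bd K t)"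
          by (rule chain_cong) (use bd_sub[OF ms i1 1] eqL in blast)
        then show ?thesis using 1 treg inv4 eqL by auto
      next
        case 2
        then obtain r where "regular_pair W r \<sigma>" using treg upper_regular_def by blast
        then show ?thesis using reg_conflict[OF ms G(8)] by blast
      next
        case 3
        have "chain_ext U' (bd K \<tau>) = {}"
        proof (rule chain_zero_intro[OF G(4) G(2)])
          have "chain_ext U' (bd K \<tau> - {\<sigma>}) = chain_ext U (bd K \<tau> - {\<sigma>})"
            by (rule chain_cong) (use G(3) eqL in blast)
          then show "U' \<sigma> = chain_ext U' (bd K \<tau> - {\<sigma>})" using st unfolding U'_def by simp
        qed
        then show ?thesis using 3 unfolding U'_def by simp
      qed
    qed
    have "ref_inv K W i U'" unfolding ref_inv_def
      apply (intro conjI ballI allI impI)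
          apply (rule h1, assumption)
         apply (rule h2, assumption)
        apply (rule h3, assumption+)
       apply (rule h4[THEN conjunct1], assumption+)
      apply (rule h4[THEN conjunct2], assumption+)
      done
    then show ?thesis by blast
  next
    assume "\<exists>\<nu>. filling_step ?L ?L' \<nu>"
    then obtain \<nu> where fs: "filling_step ?L ?L' \<nu>" by blast
    note F = fill_facts[OF fs]
    have cr: "critical W \<nu>" unfolding critical_def using i fs by blast
    define U' where "U' = U(\<nu> := {\<nu>})"
    have eqL: "U' x = U x" if "x \<in> ?L" for x using that F(2) unfolding U'_def by auto
    have h1: "U' x = {}" if "x \<notin> ?L'" for x
    proof -
      have "x \<notin> ?L" "x \<noteq> \<nu>" using that F(1,4) by auto
      then show ?thesis using inv1 unfolding U'_def by simp
    qed
    have h2: "U' x \<subseteq> {\<mu>\<in>K. critical W \<mu> \<and> card \<mu> = card x}" if "x \<in> ?L'" for x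
    proof (cases "x = \<nu>")
      case True then show ?thesis using cr F(1) LK unfolding U'_def by auto
    next
      case False then have "x \<in> ?L" using that F(5)[of x] by blast
      then show ?thesis using inv2 eqL by auto
    qed
    have h3: "U' x = {x}" if "x \<in> ?L'" "critical W x" for x
    proof (cases "x = \<nu>")
      case True then show ?thesis unfolding U'_def by simp
    next
      case False then have "x \<in> ?L" using that F(5)[of x] by blast
      then show ?thesis using inv3 eqL that(2) by auto
    qed
    have h4: "U' t = {} \<and> chain_ext U' (bd K t) = {}" if tin: "t \<in> ?L'" and treg: "upper_regular W t" for t
    proof -
      obtain r where rp: "regular_pair W r t" using treg upper_regular_def by blast
      have "t \<noteq> \<nu>" using crit_not_reg[OF ms cr rp] by blast
      then have 1: "t \<in> ?L" using tin F(5)[of t] by blast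
      have "chain_ext U' (bd K t) = chain_ext U (bd K t)"
        by (rule chain_cong) (use bd_sub[OF ms i1 1] eqL in blast)
      then show ?thesis using 1 treg inv4 eqL by auto
    qed
    have "ref_inv K W i U'" unfolding ref_inv_def
      apply (intro conjI ballI allI impI)
          apply (rule h1, assumption)
         apply (rule h2, assumption)
        apply (rule h3, assumption+)
       apply (rule h4[THEN conjunct1], assumption+)
      apply (rule h4[THEN conjunct2], assumption+)
      done
    then show ?thesis by blast
  qed
qed


definition coref_inv where
  "coref_inv K W n U \<longleftrightarrow> (\<forall>\<nu>. \<nu> \<notin> K - W ! n \<longrightarrow> U \<nu> = {}) \<and>
     (\<forall>\<nu>\<in>K - W ! n. U \<nu> \<subseteq> {\<mu>\<in>K. critical W \<mu> \<and> card \<mu> = card \<nu>}) \<and>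
     (\<forall>\<nu>\<in>K - W ! n. critical W \<nu> \<longrightarrow> U \<nu> = {\<nu>}) \<and>
     (\<forall>\<sigma>\<in>K - W ! n. lower_regular W \<sigma> \<longrightarrow> U \<sigma> = {} \<and> chain_ext U (cobd K \<sigma>) = {})"

lemma coref_exists_step:
  assumes ms: "morse_sequence K W" and i: "0 < i" "i < length W" and inv: "coref_inv K W i U"
  shows "\<exists>U'. coref_inv K W (i - 1) U'"
proof -
  let ?L = "W ! (i - 1)" and ?L' = "W ! i"
  let ?M = "K - ?L'" and ?M' = "K - ?L"
  have LK: "?L' \<subseteq> K" using ms_inK[OF ms] i by simp
  note inv' = inv[unfolded coref_inv_def]
  note inv1 = inv'[THEN conjunct1, rule_format]
  note inv2 = inv'[THEN conjunct2, THEN conjunct1, rule_format]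
  note inv3 = inv'[THEN conjunct2, THEN conjunct2, THEN conjunct1, rule_format]
  note inv4 = inv'[THEN conjunct2, THEN conjunct2, THEN conjunct2, rule_format]
  from ms_step[OF ms i] show ?thesis
  proof
    assume "\<exists>\<sigma> \<tau>. expansion_step ?L ?L' \<sigma> \<tau>"
    then obtain \<sigma> \<tau> where ex: "expansion_step ?L ?L' \<sigma> \<tau>" by blast
    note E = exp_facts[OF ex] and G = exp_geom[OF ms i ex]
    have st: "\<sigma> \<noteq> \<tau>" using E(5) by blast
    have MM: "x \<in> ?M' \<longleftrightarrow> x = \<sigma> \<or> x = \<tau> \<or> x \<in> ?M" for x using E(9)[of x] E(3,4) G(9,10) by auto
    have nM: "\<sigma> \<notin> ?M" "\<tau> \<notin> ?M" using E(1,2) by auto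
    define U' where "U' = U(\<tau> := chain_ext U (cobd K \<sigma> - {\<tau>}), \<sigma> := {})"
    have eqM: "U' x = U x" if "x \<in> ?M" for x using that nM unfolding U'_def by auto
    have h1: "U' x = {}" if "x \<notin> ?M'" for x
    proof -
      have "x \<notin> ?M" "x \<noteq> \<sigma>" "x \<noteq> \<tau>" using that MM[of x] by auto
      then show ?thesis using inv1 unfolding U'_def by simp
    qed
    have h2: "U' x \<subseteq> {\<mu>\<in>K. critical W \<mu> \<and> card \<mu> = card x}" if "x \<in> ?M'" for x
    proof -
      have "x = \<sigma> \<or> x = \<tau> \<or> x \<in> ?M" using that MM[of x] by blast
      then consider "x \<in> ?M" | "x = \<sigma>" | "x = \<tau>" by blast
      then show ?thesis
      proof cases
        case 1 then show ?thesis using inv2 eqM by auto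
      next
        case 3
        have "U' x = chain_ext U (cobd K \<sigma> - {\<tau>})" using 3 st unfolding U'_def by simp
        also have "\<dots> \<subseteq> \<Union> (U ` (cobd K \<sigma> - {\<tau>}))" by (rule chain_sub)
        also have "\<dots> \<subseteq> {\<mu>\<in>K. critical W \<mu> \<and> card \<mu> = card x}"
        proof
          fix \<mu> assume "\<mu> \<in> \<Union> (U ` (cobd K \<sigma> - {\<tau>}))"
          then obtain \<rho> where r: "\<rho> \<in> cobd K \<sigma> - {\<tau>}" "\<mu> \<in> U \<rho>" by blast
          have "card \<rho> = card x" using r(1) G(1) 3 unfolding cobd_def by auto
          moreover have "\<rho> \<in> ?M" using r(1) G(6) by blast
          ultimately show "\<mu> \<in> {\<mu>\<in>K. critical W \<mu> \<and> card \<mu> = card x}" using inv2[of \<rho>] r(2) by auto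
        qed
        finally show ?thesis .
      next
        case 2 then show ?thesis unfolding U'_def by simp
      qed
    qed
    have h3: "U' x = {x}" if "x \<in> ?M'" "critical W x" for x
    proof -
      have "x \<noteq> \<sigma>" "x \<noteq> \<tau>" using crit_not_reg[OF ms that(2) G(8)] by auto
      then have "x \<in> ?M" using that(1) MM[of x] by blast
      then show ?thesis using inv3 eqM that(2) by auto
    qed
    have h4: "U' t = {} \<and> chain_ext U' (cobd K t) = {}" if tin: "t \<in> ?M'" and treg: "lower_regular W t" for t
    proof -
      have "t = \<sigma> \<or> t = \<tau> \<or> t \<in> ?M" using tin MM[of t] by blast
      then consider "t \<in> ?M" | "t = \<sigma>" | "t = \<tau>" by blast
      then show ?thesis
      proof cases
        case 1
        have "chain_ext U' (cobd K t) = chain_ext U (cobd K t)"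
          by (rule chain_cong) (use cobd_sub[OF ms i(2) 1] eqM in blast)
        then show ?thesis using 1 treg inv4 eqM by auto
      next
        case 3
        then obtain r where "regular_pair W \<tau> r" using treg lower_regular_def by blast
        then show ?thesis using reg_conflict[OF ms _ G(8)] by blast
      next
        case 2
        have "chain_ext U' (cobd K \<sigma>) = {}"
        proof (rule chain_zero_intro[OF G(7) G(5)])
          have "chain_ext U' (cobd K \<sigma> - {\<tau>}) = chain_ext U (cobd K \<sigma> - {\<tau>})"
            by (rule chain_cong) (use G(6) eqM in blast)
          then show "U' \<tau> = chain_ext U' (cobd K \<sigma> - {\<tau>})" using st unfolding U'_def by simp
        qed
        then show ?thesis using 2 unfolding U'_def by simp
      qed
    qed
    have "coref_inv K W (i - 1) U'" unfolding coref_inv_def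
      apply (intro conjI ballI allI impI)
          apply (rule h1, assumption)
         apply (rule h2, assumption)
        apply (rule h3, assumption+)
       apply (rule h4[THEN conjunct1], assumption+)
      apply (rule h4[THEN conjunct2], assumption+)
      done
    then show ?thesis by blast
  next
    assume "\<exists>\<nu>. filling_step ?L ?L' \<nu>"
    then obtain \<nu> where fs: "filling_step ?L ?L' \<nu>" by blast
    note F = fill_facts[OF fs]
    have cr: "critical W \<nu>" unfolding critical_def using i fs by blast
    have MM: "x \<in> ?M' \<longleftrightarrow> x = \<nu> \<or> x \<in> ?M" for x using F(5)[of x] F(2) crit_inK[OF ms cr] by auto
    have nM: "\<nu> \<notin> ?M" using F(1) by auto
    define U' where "U' = U(\<nu> := {\<nu>})"
    have eqM: "U' x = U x" if "x \<in> ?M" for x using that nM unfolding U'_def by auto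
    have h1: "U' x = {}" if "x \<notin> ?M'" for x
    proof -
      have "x \<notin> ?M" "x \<noteq> \<nu>" using that MM[of x] by auto
      then show ?thesis using inv1 unfolding U'_def by simp
    qed
    have h2: "U' x \<subseteq> {\<mu>\<in>K. critical W \<mu> \<and> card \<mu> = card x}" if "x \<in> ?M'" for x
    proof (cases "x = \<nu>")
      case True then show ?thesis using cr F(1) LK unfolding U'_def by auto
    next
      case False then have "x \<in> ?M" using that MM[of x] by blast
      then show ?thesis using inv2 eqM by auto
    qed
    have h3: "U' x = {x}" if "x \<in> ?M'" "critical W x" for x
    proof (cases "x = \<nu>")
      case True then show ?thesis unfolding U'_def by simp
    next
      case False then have "x \<in> ?M" using that MM[of x] by blast
      then show ?thesis using inv3 eqM that(2) by auto
    qed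
    have h4: "U' t = {} \<and> chain_ext U' (cobd K t) = {}" if tin: "t \<in> ?M'" and treg: "lower_regular W t" for t
    proof -
      obtain r where rp: "regular_pair W t r" using treg lower_regular_def by blast
      have "t \<noteq> \<nu>" using crit_not_reg[OF ms cr rp] by blast
      then have 1: "t \<in> ?M" using tin MM[of t] by blast
      have "chain_ext U' (cobd K t) = chain_ext U (cobd K t)"
        by (rule chain_cong) (use cobd_sub[OF ms i(2) 1] eqM in blast)
      then show ?thesis using 1 treg inv4 eqM by auto
    qed
    have "coref_inv K W (i - 1) U'" unfolding coref_inv_def
      apply (intro conjI ballI allI impI)
          apply (rule h1, assumption)
         apply (rule h2, assumption)
        apply (rule h3, assumption+)
       apply (rule h4[THEN conjunct1], assumption+)
      apply (rule h4[THEN conjunct2], assumption+)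
      done
    then show ?thesis by blast
  qed
qed


lemma ref_exists: assumes ms: "morse_sequence K W" shows "\<exists>U. reference_map K W U"
proof -
  have all: "n < length W \<longrightarrow> (\<exists>U. ref_inv K W n U)" for n
  proof (induction n)
    case 0
    have "ref_inv K W 0 (\<lambda>_. {})" using ms_basic[OF ms] unfolding ref_inv_def by simp
    then show ?case by blast
  next
    case (Suc n)
    show ?case
    proof
      assume a: "Suc n < length W"
      then obtain U where "ref_inv K W n U" using Suc.IH by auto
      then show "\<exists>U. ref_inv K W (Suc n) U" using ref_exists_step[OF ms, of "Suc n" U] a by simp
    qed
  qed
  obtain U where inv: "ref_inv K W (length W - 1) U" using all[of "length W - 1"] ms_basic[OF ms] by auto
  have WK: "W ! (length W - 1) = K" using ms_basic[OF ms] by simp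
  note inv' = inv[unfolded ref_inv_def WK]
  note inv1 = inv'[THEN conjunct1, rule_format]
  note inv2 = inv'[THEN conjunct2, THEN conjunct1, rule_format]
  note inv3 = inv'[THEN conjunct2, THEN conjunct2, THEN conjunct1, rule_format]
  note inv4 = inv'[THEN conjunct2, THEN conjunct2, THEN conjunct2, rule_format]
  have fr1: "U \<nu> \<subseteq> {\<mu> \<in> psimplices K p. critical W \<mu>}" if "\<nu> \<in> psimplices K p" for p \<nu>
  proof
    fix \<mu> assume m: "\<mu> \<in> U \<nu>"
    have nK: "\<nu> \<in> K" "card \<nu> = p + 1" using that unfolding psimplices_def by auto
    have "\<mu> \<in> {\<mu>\<in>K. critical W \<mu> \<and> card \<mu> = card \<nu>}" using inv2[OF nK(1)] m by (rule subsetD)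
    then show "\<mu> \<in> {\<mu> \<in> psimplices K p. critical W \<mu>}" using nK(2) unfolding psimplices_def by simp
  qed
  have fr: "frame K W U" unfolding frame_def
    apply (intro conjI allI ballI impI)
     apply (erule fr1)
    apply (erule inv1)
    done
  have "reference_map K W U" unfolding reference_map_def
  proof (intro conjI allI impI)
    show "frame K W U" by (rule fr)
  next
    fix \<nu> assume "critical W \<nu>" then show "U \<nu> = {\<nu>}" using inv3 crit_inK[OF ms] by blast
  next
    fix t assume tr: "upper_regular W t"
    then have "t \<in> K" using reg_inK[OF ms] unfolding upper_regular_def by blast
    then show "U t = {}" using inv4 tr by blast
  next
    fix t assume tr: "upper_regular W t"
    then have "t \<in> K" using reg_inK[OF ms] unfolding upper_regular_def by blast
    then show "chain_ext U (bd K t) = {}" using inv4 tr by blast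
  qed
  then show ?thesis by blast
qed

lemma coref_exists: assumes ms: "morse_sequence K W" shows "\<exists>U. coreference_map K W U"
proof -
  have top: "length W - 1 < length W" using ms_basic[OF ms] by simp
  have WK: "W ! (length W - 1) = K" using ms_basic[OF ms] by simp
  have "\<exists>U. coref_inv K W 0 U"
  proof (rule inc_induct[of 0 "length W - 1"])
    show "0 \<le> length W - 1" by simp
    have "coref_inv K W (length W - 1) (\<lambda>_. {})" using WK unfolding coref_inv_def by simp
    then show "\<exists>U. coref_inv K W (length W - 1) U" by blast
  next
    fix n assume n: "0 \<le> n" "n < length W - 1" and ih: "\<exists>U. coref_inv K W (Suc n) U"
    then obtain U where "coref_inv K W (Suc n) U" by blast
    then show "\<exists>U. coref_inv K W n U" using coref_exists_step[OF ms, of "Suc n" U] n by simp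
  qed
  then obtain U where inv: "coref_inv K W 0 U" by blast
  have W0: "K - W ! 0 = K" using ms_basic[OF ms] by simp
  note inv' = inv[unfolded coref_inv_def W0]
  note inv1 = inv'[THEN conjunct1, rule_format]
  note inv2 = inv'[THEN conjunct2, THEN conjunct1, rule_format]
  note inv3 = inv'[THEN conjunct2, THEN conjunct2, THEN conjunct1, rule_format]
  note inv4 = inv'[THEN conjunct2, THEN conjunct2, THEN conjunct2, rule_format]
  have fr1: "U \<nu> \<subseteq> {\<mu> \<in> psimplices K p. critical W \<mu>}" if "\<nu> \<in> psimplices K p" for p \<nu>
  proof
    fix \<mu> assume m: "\<mu> \<in> U \<nu>"
    have nK: "\<nu> \<in> K" "card \<nu> = p + 1" using that unfolding psimplices_def by auto
    have "\<mu> \<in> {\<mu>\<in>K. critical W \<mu> \<and> card \<mu> = card \<nu>}" using inv2[OF nK(1)] m by (rule subsetD)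
    then show "\<mu> \<in> {\<mu> \<in> psimplices K p. critical W \<mu>}" using nK(2) unfolding psimplices_def by simp
  qed
  have fr: "frame K W U" unfolding frame_def
    apply (intro conjI allI ballI impI)
     apply (erule fr1)
    apply (erule inv1)
    done
  have "coreference_map K W U" unfolding coreference_map_def
  proof (intro conjI allI impI)
    show "frame K W U" by (rule fr)
  next
    fix \<nu> assume "critical W \<nu>" then show "U \<nu> = {\<nu>}" using inv3 crit_inK[OF ms] by blast
  next
    fix t assume tr: "lower_regular W t"
    then have "t \<in> K" using reg_inK[OF ms] unfolding lower_regular_def by blast
    then show "U t = {}" using inv4 tr by blast
  next
    fix t assume tr: "lower_regular W t"
    then have "t \<in> K" using reg_inK[OF ms] unfolding lower_regular_def by blast
    then show "chain_ext U (cobd K t) = {}" using inv4 tr by blast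
  qed
  then show ?thesis by blast
qed

lemma reference_map_D:
  assumes "reference_map K W U"
  shows "critical W \<nu> \<Longrightarrow> U \<nu> = {\<nu>}" "upper_regular W t \<Longrightarrow> U t = {}"
    "upper_regular W t \<Longrightarrow> chain_ext U (bd K t) = {}" "\<nu> \<notin> K \<Longrightarrow> U \<nu> = {}"
proof -
  note A = assms[unfolded reference_map_def]
  show "critical W \<nu> \<Longrightarrow> U \<nu> = {\<nu>}" by (rule A[THEN conjunct2, THEN conjunct1, rule_format])
  show "upper_regular W t \<Longrightarrow> U t = {}" by (rule A[THEN conjunct2, THEN conjunct2, rule_format, THEN conjunct1])
  show "upper_regular W t \<Longrightarrow> chain_ext U (bd K t) = {}" by (rule A[THEN conjunct2, THEN conjunct2, rule_format, THEN conjunct2])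
  show "\<nu> \<notin> K \<Longrightarrow> U \<nu> = {}" by (rule A[THEN conjunct1, unfolded frame_def, THEN conjunct2, rule_format])
qed

lemma coreference_map_D:
  assumes "coreference_map K W U"
  shows "critical W \<nu> \<Longrightarrow> U \<nu> = {\<nu>}" "lower_regular W t \<Longrightarrow> U t = {}"
    "lower_regular W t \<Longrightarrow> chain_ext U (cobd K t) = {}" "\<nu> \<notin> K \<Longrightarrow> U \<nu> = {}"
proof -
  note A = assms[unfolded coreference_map_def]
  show "critical W \<nu> \<Longrightarrow> U \<nu> = {\<nu>}" by (rule A[THEN conjunct2, THEN conjunct1, rule_format])
  show "lower_regular W t \<Longrightarrow> U t = {}" by (rule A[THEN conjunct2, THEN conjunct2, rule_format, THEN conjunct1])
  show "lower_regular W t \<Longrightarrow> chain_ext U (cobd K t) = {}" by (rule A[THEN conjunct2, THEN conjunct2, rule_format, THEN conjunct2])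
  show "\<nu> \<notin> K \<Longrightarrow> U \<nu> = {}" by (rule A[THEN conjunct1, unfolded frame_def, THEN conjunct2, rule_format])
qed

lemma ref_unique:
  assumes ms: "morse_sequence K W" and r1: "reference_map K W U1" and r2: "reference_map K W U2"
  shows "U1 = U2"
proof -
  have agree: "n < length W \<longrightarrow> (\<forall>x\<in>W ! n. U1 x = U2 x)" for n
  proof (induction n)
    case 0 then show ?case using ms_basic[OF ms] by simp
  next
    case (Suc n)
    show ?case
    proof
      assume a: "Suc n < length W"
      have i: "0 < Suc n" "Suc n < length W" using a by auto
      have IH: "\<forall>x\<in>W ! (Suc n - 1). U1 x = U2 x" using Suc.IH a by simp
      from ms_step[OF ms i] show "\<forall>x\<in>W ! Suc n. U1 x = U2 x"
      proof
        assume "\<exists>\<sigma> \<tau>. expansion_step (W ! (Suc n - 1)) (W ! Suc n) \<sigma> \<tau>"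
        then obtain \<sigma> \<tau> where ex: "expansion_step (W ! (Suc n - 1)) (W ! Suc n) \<sigma> \<tau>" by blast
        note E = exp_facts[OF ex] and G = exp_geom[OF ms i ex]
        have ur: "upper_regular W \<tau>" unfolding upper_regular_def using G(8) by blast
        have c1: "chain_ext U1 (bd K \<tau>) = {}" using reference_map_D(3)[OF r1 ur] .
        have c2: "chain_ext U2 (bd K \<tau>) = {}" using reference_map_D(3)[OF r2 ur] .
        have "U1 \<sigma> = chain_ext U1 (bd K \<tau> - {\<sigma>})" by (rule chain_zero_insert[OF G(4) G(2) c1])
        also have "\<dots> = chain_ext U2 (bd K \<tau> - {\<sigma>})"
          by (rule chain_cong) (use G(3) IH in blast)
        also have "\<dots> = U2 \<sigma>" by (rule chain_zero_insert[OF G(4) G(2) c2, symmetric])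
        finally have "U1 \<sigma> = U2 \<sigma>" .
        moreover have "U1 \<tau> = U2 \<tau>" using reference_map_D(2)[OF r1 ur] reference_map_D(2)[OF r2 ur] by simp
        ultimately show ?thesis using IH by (auto simp: E(9))
      next
        assume "\<exists>\<nu>. filling_step (W ! (Suc n - 1)) (W ! Suc n) \<nu>"
        then obtain \<nu> where fs: "filling_step (W ! (Suc n - 1)) (W ! Suc n) \<nu>" by blast
        have cr: "critical W \<nu>" unfolding critical_def using i fs by blast
        then have "U1 \<nu> = U2 \<nu>" using reference_map_D(1)[OF r1 cr] reference_map_D(1)[OF r2 cr] by simp
        then show ?thesis using IH by (auto simp: fill_facts(5)[OF fs])
      qed
    qed
  qed
  have "\<forall>x\<in>K. U1 x = U2 x" using agree[of "length W - 1"] ms_basic[OF ms] by auto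
  moreover have "\<forall>x. x \<notin> K \<longrightarrow> U1 x = {} \<and> U2 x = {}"
    using reference_map_D(4)[OF r1] reference_map_D(4)[OF r2] by blast
  ultimately show ?thesis by (metis ext)
qed

lemma coref_unique:
  assumes ms: "morse_sequence K W" and r1: "coreference_map K W U1" and r2: "coreference_map K W U2"
  shows "U1 = U2"
proof -
  have "\<forall>x\<in>K - W ! 0. U1 x = U2 x"
  proof (rule inc_induct[of 0 "length W - 1"])
    show "0 \<le> length W - 1" by simp
    show "\<forall>x\<in>K - W ! (length W - 1). U1 x = U2 x" using ms_basic[OF ms] by simp
  next
    fix n assume n: "0 \<le> n" "n < length W - 1" and IH: "\<forall>x\<in>K - W ! Suc n. U1 x = U2 x"
    have i: "0 < Suc n" "Suc n < length W" using n by auto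
    have LK: "W ! Suc n \<subseteq> K" using ms_inK[OF ms i(2)] .
    from ms_step[OF ms i] show "\<forall>x\<in>K - W ! n. U1 x = U2 x"
    proof
      assume "\<exists>\<sigma> \<tau>. expansion_step (W ! (Suc n - 1)) (W ! Suc n) \<sigma> \<tau>"
      then obtain \<sigma> \<tau> where ex: "expansion_step (W ! (Suc n - 1)) (W ! Suc n) \<sigma> \<tau>" by blast
      note E = exp_facts[OF ex] and G = exp_geom[OF ms i ex]
      have lr: "lower_regular W \<sigma>" unfolding lower_regular_def using G(8) by blast
      have c1: "chain_ext U1 (cobd K \<sigma>) = {}" using coreference_map_D(3)[OF r1 lr] .
      have c2: "chain_ext U2 (cobd K \<sigma>) = {}" using coreference_map_D(3)[OF r2 lr] .
      have "U1 \<tau> = chain_ext U1 (cobd K \<sigma> - {\<tau>})" by (rule chain_zero_insert[OF G(7) G(5) c1])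
      also have "\<dots> = chain_ext U2 (cobd K \<sigma> - {\<tau>})"
        by (rule chain_cong) (use G(6) IH in blast)
      also have "\<dots> = U2 \<tau>" by (rule chain_zero_insert[OF G(7) G(5) c2, symmetric])
      finally have "U1 \<tau> = U2 \<tau>" .
      moreover have "U1 \<sigma> = U2 \<sigma>" using coreference_map_D(2)[OF r1 lr] coreference_map_D(2)[OF r2 lr] by simp
      moreover have "K - W ! n \<subseteq> insert \<sigma> (insert \<tau> (K - W ! Suc n))" by (auto simp: E(9))
      ultimately show ?thesis using IH by blast
    next
      assume "\<exists>\<nu>. filling_step (W ! (Suc n - 1)) (W ! Suc n) \<nu>"
      then obtain \<nu> where fs: "filling_step (W ! (Suc n - 1)) (W ! Suc n) \<nu>" by blast
      have cr: "critical W \<nu>" unfolding critical_def using i fs by blast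
      then have "U1 \<nu> = U2 \<nu>" using coreference_map_D(1)[OF r1 cr] coreference_map_D(1)[OF r2 cr] by simp
      moreover have "K - W ! n \<subseteq> insert \<nu> (K - W ! Suc n)" by (auto simp: fill_facts(5)[OF fs])
      ultimately show ?thesis using IH by blast
    qed
  qed
  then have "\<forall>x\<in>K. U1 x = U2 x" using ms_basic[OF ms] by simp
  moreover have "\<forall>x. x \<notin> K \<longrightarrow> U1 x = {} \<and> U2 x = {}"
    using coreference_map_D(4)[OF r1] coreference_map_D(4)[OF r2] by blast
  ultimately show ?thesis by (metis ext)
qed

theorem theorem1:
  fixes K :: "'a set set" and W :: "'a set set list"
  assumes "simplicial_complex K" and "morse_sequence K W"
  shows "(\<exists>!\<Upsilon>. reference_map K W \<Upsilon>) \<and> (\<exists>!\<Upsilon>. coreference_map K W \<Upsilon>)"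
  using ref_exists[OF assms(2)] ref_unique[OF assms(2)] coref_exists[OF assms(2)] coref_unique[OF assms(2)]
  by blast

end
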